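(* Let $R=(\mathbb{Z}_I,\oplus,\otimes)$ be an $I$-based ring and $S=(\mathbb{Z}_L,\oplus,\otimes)$ an $L$-based ring which is a based subring of $R$. Let $N=(\mathbb{Z}_J,\oplus,\otimes)$ be a based $S$-module with basis $J$. If $S$ is divisible in $R$, then the induced $R$-module $\mathrm{Ind}^R_S(N)=R\odot_S N$ is a torsion $R$-module whenever $N$ is a torsion $S$-module.
   Context: For a set $X$, $\mathbb{Z}_X$ is the free $\mathbb{Z}$-module with basis $X$. Let $(I,\mathbbm{1})$ be an involutive pointed set (involution $\alpha\mapsto\overline{\alpha}$). A ring structure on $\mathbb{Z}_I$ is given by constants $N^i_{\alpha,i'}\in\mathbb{N}\cup\{0\}$ with $\alpha\otimes i'=\sum_i N^i_{\alpha,i'} i$ (finite sums); write $i\subset\alpha\otimes i'$ if $N^i_{\alpha,i'}\neq0$. It is $I$-based if $\overline{\alpha\otimes\alpha'}=\overline{\alpha'}\otimes\overline{\alpha}$ and $\mathbbm{1}\subset\overline{\alpha}\otimes\alpha'$ iff $\alpha=\alpha'$. A module structure of $\mathbb{Z}_I$ on $\mathbb{Z}_J$ is given by constants $N^j_{\alpha,j'}\ge0$ with $\alpha\otimes j'=\sum_j N^j_{\alpha,j'}j$; it is $J$-based if $j\subset\alpha\otimes j'\iff j'\subset\overline{\alpha}\otimes j$; co-finite if for all $j,j'$ the set $\{\alpha: j\subset\alpha\otimes j'\}$ is finite; connected if for all $j,j'$ there is $\alpha$ with $j\subset\alpha\otimes j'$; torsion if co-finite and connected. $S$ is a based subring of $R$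 if $L\subset I$ is closed under involution, contains $\mathbbm{1}$, and the products of elements of $L$ only involve elements of $L$. $S$ is divisible in $R$ if $R\cong\bigoplus_{\Omega}S$ as based $S$-modules (an $S$-module isomorphism sending basis elements to basis elements). $\mathrm{Ind}^R_S(N)=R\odot_S N$ is the algebraic tensor product with left $R$-action by multiplication on the first factor. *)

theory Defs
  imports Main
begin

text \<open>Elements of a free Z-module Z_X are modelled as finitely supported
  integer-valued functions on X.  A ring structure on Z_I is given by
  structure constants NR a b c = coefficient of c in a \<otimes> b; a module
  structure of Z_A (A a subset of I) on Z_J by NM a j' j = coefficient of j
  in a \<otimes> j'.\<close>

definition supp3 :: "('a \<Rightarrow> 'b \<Rightarrow> 'c \<Rightarrow> nat) \<Rightarrow> 'a \<Rightarrow> 'b \<Rightarrow> 'c set" where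
  "supp3 N a b = {c. N a b c \<noteq> 0}"

definition ring_struct :: "'i set \<Rightarrow> 'i \<Rightarrow> ('i \<Rightarrow> 'i \<Rightarrow> 'i \<Rightarrow> nat) \<Rightarrow> bool" where
  "ring_struct I one NR \<longleftrightarrow>
     one \<in> I \<and>
     (\<forall>a\<in>I. \<forall>b\<in>I. finite (supp3 NR a b) \<and> supp3 NR a b \<subseteq> I) \<and>
     (\<forall>a\<in>I. \<forall>c. NR one a c = (if c = a then 1 else 0) \<and> NR a one c = (if c = a then 1 else 0)) \<and>
     (\<forall>a\<in>I. \<forall>b\<in>I. \<forall>c\<in>I. \<forall>d.
        (\<Sum>k\<in>supp3 NR a b. NR a b k * NR k c d) = (\<Sum>k\<in>supp3 NR b c. NR b c k * NR a k d))"

definition involutive_pointed :: "'i set \<Rightarrow> 'i \<Rightarrow> ('i \<Rightarrow> 'i) \<Rightarrow> bool" where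
  "involutive_pointed I one bar \<longleftrightarrow>
     one \<in> I \<and> bar one = one \<and> (\<forall>a\<in>I. bar a \<in> I \<and> bar (bar a) = a)"

definition based_ring :: "'i set \<Rightarrow> 'i \<Rightarrow> ('i \<Rightarrow> 'i) \<Rightarrow> ('i \<Rightarrow> 'i \<Rightarrow> 'i \<Rightarrow> nat) \<Rightarrow> bool" where
  "based_ring I one bar NR \<longleftrightarrow>
     involutive_pointed I one bar \<and> ring_struct I one NR \<and>
     (\<forall>a\<in>I. \<forall>b\<in>I. \<forall>c\<in>I. NR a b c = NR (bar b) (bar a) (bar c)) \<and>
     (\<forall>a\<in>I. \<forall>a'\<in>I. NR (bar a) a' one \<noteq> 0 \<longleftrightarrow> a = a')"

definition based_subring :: "'i set \<Rightarrow> 'i \<Rightarrow> ('i \<Rightarrow> 'i) \<Rightarrow> ('i \<Rightarrow> 'i \<Rightarrow> 'i \<Rightarrow> nat) \<Rightarrow> 'i set \<Rightarrow> bool" where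
  "based_subring I one bar NR L \<longleftrightarrow>
     L \<subseteq> I \<and> one \<in> L \<and> (\<forall>a\<in>L. bar a \<in> L) \<and>
     (\<forall>a\<in>L. \<forall>b\<in>L. supp3 NR a b \<subseteq> L)"

definition module_struct :: "'i set \<Rightarrow> 'i \<Rightarrow> ('i \<Rightarrow> 'i \<Rightarrow> 'i \<Rightarrow> nat) \<Rightarrow> 'j set \<Rightarrow> ('i \<Rightarrow> 'j \<Rightarrow> 'j \<Rightarrow> nat) \<Rightarrow> bool" where
  "module_struct A one NR J NM \<longleftrightarrow>
     (\<forall>a\<in>A. \<forall>j\<in>J. finite (supp3 NM a j) \<and> supp3 NM a j \<subseteq> J) \<and>
     (\<forall>j\<in>J. \<forall>j'. NM one j j' = (if j' = j then 1 else 0)) \<and>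
     (\<forall>a\<in>A. \<forall>b\<in>A. \<forall>j\<in>J. \<forall>j''.
        (\<Sum>k\<in>supp3 NR a b. NR a b k * NM k j j'') = (\<Sum>j'\<in>supp3 NM b j. NM b j j' * NM a j' j''))"

definition based_module :: "'i set \<Rightarrow> 'i \<Rightarrow> ('i \<Rightarrow> 'i) \<Rightarrow> ('i \<Rightarrow> 'i \<Rightarrow> 'i \<Rightarrow> nat) \<Rightarrow> 'j set \<Rightarrow> ('i \<Rightarrow> 'j \<Rightarrow> 'j \<Rightarrow> nat) \<Rightarrow> bool" where
  "based_module A one bar NR J NM \<longleftrightarrow>
     module_struct A one NR J NM \<and>
     (\<forall>a\<in>A. \<forall>j\<in>J. \<forall>j'\<in>J. NM a j' j \<noteq> 0 \<longleftrightarrow> NM (bar a) j j' \<noteq> 0)"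

definition cofinite_module :: "'i set \<Rightarrow> 'j set \<Rightarrow> ('i \<Rightarrow> 'j \<Rightarrow> 'j \<Rightarrow> nat) \<Rightarrow> bool" where
  "cofinite_module A J NM \<longleftrightarrow> (\<forall>j\<in>J. \<forall>j'\<in>J. finite {a\<in>A. NM a j' j \<noteq> 0})"

definition connected_module :: "'i set \<Rightarrow> 'j set \<Rightarrow> ('i \<Rightarrow> 'j \<Rightarrow> 'j \<Rightarrow> nat) \<Rightarrow> bool" where
  "connected_module A J NM \<longleftrightarrow> (\<forall>j\<in>J. \<forall>j'\<in>J. \<exists>a\<in>A. NM a j' j \<noteq> 0)"

definition torsion_module :: "'i set \<Rightarrow> 'j set \<Rightarrow> ('i \<Rightarrow> 'j \<Rightarrow> 'j \<Rightarrow> nat) \<Rightarrow> bool" where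
  "torsion_module A J NM \<longleftrightarrow> cofinite_module A J NM \<and> connected_module A J NM"

text \<open>S (basis L) is divisible in R (basis I): R \<cong> \<Oplus>_\<Omega> S as based (left)
  S-modules, i.e. a bijection of bases I \<rightarrow> \<Omega> \<times> L intertwining the S-actions.
  The index set \<Omega> is taken inside the type of I, which is no loss of
  generality since |\<Omega>| \<le> |I|.\<close>
definition divisible :: "'i set \<Rightarrow> 'i set \<Rightarrow> ('i \<Rightarrow> 'i \<Rightarrow> 'i \<Rightarrow> nat) \<Rightarrow> bool" where
  "divisible I L NR \<longleftrightarrow>
     (\<exists>(\<Omega>::'i set) \<phi>. bij_betw \<phi> I (\<Omega> \<times> L) \<and>
        (\<forall>a\<in>L. \<forall>i\<in>I. \<forall>i'\<in>I.
           NR a i' i = (if fst (\<phi> i) = fst (\<phi> i') then NR a (snd (\<phi> i')) (snd (\<phi> i)) else 0)))"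

definition finsupp_on :: "'a set \<Rightarrow> ('a \<Rightarrow> int) \<Rightarrow> bool" where
  "finsupp_on X f \<longleftrightarrow> finite {x. f x \<noteq> 0} \<and> {x. f x \<noteq> 0} \<subseteq> X"

definition delta :: "'a \<Rightarrow> 'a \<Rightarrow> int" where
  "delta x = (\<lambda>y. if y = x then 1 else 0)"

text \<open>The balancing relation (r \<otimes> s) \<odot> n - r \<odot> (s \<otimes> n) in Z_{I\<times>J}.\<close>
definition tens_rel :: "('i \<Rightarrow> 'i \<Rightarrow> 'i \<Rightarrow> nat) \<Rightarrow> ('i \<Rightarrow> 'j \<Rightarrow> 'j \<Rightarrow> nat) \<Rightarrow> 'i \<Rightarrow> 'i \<Rightarrow> 'j \<Rightarrow> ('i \<times> 'j \<Rightarrow> int)" where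
  "tens_rel NR NM r s n =
     (\<lambda>(i, j). (if j = n then int (NR r s i) else 0) - (if i = r then int (NM s n j) else 0))"

definition zspan :: "('a \<Rightarrow> int) set \<Rightarrow> ('a \<Rightarrow> int) set" where
  "zspan X = {f. \<exists>F c. finite F \<and> F \<subseteq> X \<and> f = (\<lambda>x. \<Sum>g\<in>F. c g * g x)}"

text \<open>The subgroup K of relations defining the algebraic tensor product over S.\<close>
definition ind_rels :: "'i set \<Rightarrow> 'i set \<Rightarrow> 'j set \<Rightarrow> ('i \<Rightarrow> 'i \<Rightarrow> 'i \<Rightarrow> nat) \<Rightarrow> ('i \<Rightarrow> 'j \<Rightarrow> 'j \<Rightarrow> nat) \<Rightarrow> ('i \<times> 'j \<Rightarrow> int) set" where
  "ind_rels I L J NR NM = zspan {tens_rel NR NM r s n | r s n. r \<in> I \<and> s \<in> L \<and> n \<in> J}"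

text \<open>Left R-action on Z_{I\<times>J}: \<alpha> \<cdot> (i' \<odot> j) = (\<alpha> \<otimes> i') \<odot> j.\<close>
definition ind_action :: "('i \<Rightarrow> 'i \<Rightarrow> 'i \<Rightarrow> nat) \<Rightarrow> 'i \<Rightarrow> ('i \<times> 'j \<Rightarrow> int) \<Rightarrow> ('i \<times> 'j \<Rightarrow> int)" where
  "ind_action NR \<alpha> f =
     (\<lambda>(i, j). \<Sum>i'\<in>{i'. \<exists>j'. f (i', j') \<noteq> 0}. int (NR \<alpha> i' i) * f (i', j))"

text \<open>B \<subseteq> I \<times> J indexes a Z-basis {b_1 \<odot> b_2 | b \<in> B} of Z_{I\<times>J}/K: every
  class has a unique representative supported on B.\<close>
definition ind_basis :: "'i set \<Rightarrow> 'j set \<Rightarrow> ('i \<times> 'j \<Rightarrow> int) set \<Rightarrow> ('i \<times> 'j) set \<Rightarrow> bool" where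
  "ind_basis I J K B \<longleftrightarrow> B \<subseteq> I \<times> J \<and>
     (\<forall>f. finsupp_on (I \<times> J) f \<longrightarrow> (\<exists>!c. finsupp_on B c \<and> (\<lambda>x. f x - c x) \<in> K))"

definition ind_coeff :: "('i \<times> 'j \<Rightarrow> int) set \<Rightarrow> ('i \<times> 'j) set \<Rightarrow> ('i \<times> 'j \<Rightarrow> int) \<Rightarrow> ('i \<times> 'j \<Rightarrow> int)" where
  "ind_coeff K B f = (THE c. finsupp_on B c \<and> (\<lambda>x. f x - c x) \<in> K)"

definition ind_const :: "'i set \<Rightarrow> 'i set \<Rightarrow> 'j set \<Rightarrow> ('i \<Rightarrow> 'i \<Rightarrow> 'i \<Rightarrow> nat) \<Rightarrow> ('i \<Rightarrow> 'j \<Rightarrow> 'j \<Rightarrow> nat)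
    \<Rightarrow> ('i \<times> 'j) set \<Rightarrow> 'i \<Rightarrow> 'i \<times> 'j \<Rightarrow> 'i \<times> 'j \<Rightarrow> int" where
  "ind_const I L J NR NM B \<alpha> b' b =
     ind_coeff (ind_rels I L J NR NM) B (ind_action NR \<alpha> (delta b')) b"

end

theory Submission
  imports Defs
begin

lemma sum_in_zspan:
  assumes "finite P" "\<forall>p\<in>P. G p \<in> X"
  shows "(\<lambda>x. \<Sum>p\<in>P. a p * G p x) \<in> zspan X"
proof -
  define c where "c h = (\<Sum>p\<in>{p\<in>P. G p = h}. a p)" for h
  have "(\<lambda>x. \<Sum>p\<in>P. a p * G p x) = (\<lambda>x. \<Sum>h\<in>G ` P. c h * h x)"
  proof
    fix x
    have "(\<Sum>p\<in>P. a p * G p x) = (\<Sum>h\<in>G ` P. \<Sum>p\<in>{p\<in>P. G p = h}. a p * G p x)"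
      by (rule sum.image_gen[OF assms(1)])
    also have "\<dots> = (\<Sum>h\<in>G ` P. c h * h x)"
      unfolding c_def sum_distrib_right by (rule sum.cong) auto
    finally show "(\<Sum>p\<in>P. a p * G p x) = (\<Sum>h\<in>G ` P. c h * h x)" .
  qed
  then show ?thesis unfolding zspan_def using assms by blast
qed

locale ctx =
  fixes I L :: "'i set" and one :: 'i and bar :: "'i \<Rightarrow> 'i"
    and NR :: "'i \<Rightarrow> 'i \<Rightarrow> 'i \<Rightarrow> nat"
    and J :: "'j set" and NM :: "'i \<Rightarrow> 'j \<Rightarrow> 'j \<Rightarrow> nat"
    and Om :: "'i set" and phi :: "'i \<Rightarrow> 'i \<times> 'i"
  assumes R: "based_ring I one bar NR"
    and S: "based_ring L one bar NR"
    and sub: "based_subring I one bar NR L"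
    and N: "based_module L one bar NR J NM"
    and bij: "bij_betw phi I (Om \<times> L)"
    and act: "\<forall>a\<in>L. \<forall>i\<in>I. \<forall>i'\<in>I.
           NR a i' i = (if fst (phi i) = fst (phi i') then NR a (snd (phi i')) (snd (phi i)) else 0)"
begin

lemma L_sub: "L \<subseteq> I" using sub by (simp add: based_subring_def)
lemma one_I: "one \<in> I" using R by (simp add: based_ring_def involutive_pointed_def)
lemma one_L: "one \<in> L" using sub by (simp add: based_subring_def)
lemma bar_I: "a \<in> I \<Longrightarrow> bar a \<in> I" using R by (simp add: based_ring_def involutive_pointed_def)
lemma bar_bar: "a \<in> I \<Longrightarrow> bar (bar a) = a" using R by (simp add: based_ring_def involutive_pointed_def)
lemma bar_L: "a \<in> L \<Longrightarrow> bar a \<in> L" using sub by (simp add: based_subring_def)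
lemma supp_fin: "a \<in> I \<Longrightarrow> b \<in> I \<Longrightarrow> finite (supp3 NR a b)"
  using R by (simp add: based_ring_def ring_struct_def)
lemma supp_I: "a \<in> I \<Longrightarrow> b \<in> I \<Longrightarrow> supp3 NR a b \<subseteq> I"
  using R by (simp add: based_ring_def ring_struct_def)
lemma supp_L: "a \<in> L \<Longrightarrow> b \<in> L \<Longrightarrow> supp3 NR a b \<subseteq> L"
  using sub by (simp add: based_subring_def)
lemma NR_I: "a \<in> I \<Longrightarrow> b \<in> I \<Longrightarrow> NR a b c \<noteq> 0 \<Longrightarrow> c \<in> I"
  using supp_I by (auto simp: supp3_def)
lemma one_left: "a \<in> I \<Longrightarrow> NR one a c = (if c = a then 1 else 0)"
  using R by (simp add: based_ring_def ring_struct_def)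
lemma one_right: "a \<in> I \<Longrightarrow> NR a one c = (if c = a then 1 else 0)"
  using R by (simp add: based_ring_def ring_struct_def)
lemma assocR: "a \<in> I \<Longrightarrow> b \<in> I \<Longrightarrow> c \<in> I \<Longrightarrow>
   (\<Sum>k\<in>supp3 NR a b. NR a b k * NR k c d) = (\<Sum>k\<in>supp3 NR b c. NR b c k * NR a k d)"
  using R by (simp add: based_ring_def ring_struct_def)
lemma conj: "a \<in> I \<Longrightarrow> b \<in> I \<Longrightarrow> c \<in> I \<Longrightarrow> NR a b c = NR (bar b) (bar a) (bar c)"
  using R by (simp add: based_ring_def)
lemma based_one: "a \<in> I \<Longrightarrow> a' \<in> I \<Longrightarrow> NR (bar a) a' one \<noteq> 0 \<longleftrightarrow> a = a'"
  using R by (simp add: based_ring_def)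
lemma NM_fin: "a \<in> L \<Longrightarrow> j \<in> J \<Longrightarrow> finite (supp3 NM a j)"
  using N by (simp add: based_module_def module_struct_def)
lemma NM_J: "a \<in> L \<Longrightarrow> j \<in> J \<Longrightarrow> NM a j j' \<noteq> 0 \<Longrightarrow> j' \<in> J"
  using N by (auto simp: based_module_def module_struct_def supp3_def)
lemma NM_one: "j \<in> J \<Longrightarrow> NM one j j' = (if j' = j then 1 else 0)"
  using N by (simp add: based_module_def module_struct_def)
lemma NM_assoc: "a \<in> L \<Longrightarrow> b \<in> L \<Longrightarrow> j \<in> J \<Longrightarrow>
  (\<Sum>k\<in>supp3 NR a b. NR a b k * NM k j j'') = (\<Sum>j'\<in>supp3 NM b j. NM b j j' * NM a j' j'')"
  using N by (simp add: based_module_def module_struct_def)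

lemma L1:
  assumes "a \<in> I" "b \<in> I" "c \<in> I" "NR a b c \<noteq> 0"
  shows "NR (bar c) a (bar b) \<noteq> 0"
proof -
  have eq: "(\<Sum>k\<in>supp3 NR (bar c) a. NR (bar c) a k * NR k b one) = (\<Sum>k\<in>supp3 NR a b. NR a b k * NR (bar c) k one)"
    using assocR[OF bar_I[OF assms(3)] assms(1,2)] .
  have "c \<in> supp3 NR a b" using assms(4) by (simp add: supp3_def)
  moreover have "NR a b c * NR (bar c) c one \<noteq> 0" using assms based_one by simp
  ultimately have "(\<Sum>k\<in>supp3 NR a b. NR a b k * NR (bar c) k one) \<noteq> 0"
    using supp_fin[OF assms(1,2)] by (simp add: sum_eq_0_iff) blast
  then obtain k where k: "k \<in> supp3 NR (bar c) a" "NR k b one \<noteq> 0"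
    using eq by (metis (no_types, lifting) mult_0_right sum.neutral)
  have kI: "k \<in> I" using k(1) supp_I[OF bar_I[OF assms(3)] assms(1)] by blast
  have "NR (bar (bar k)) b one \<noteq> 0" using k(2) bar_bar[OF kI] by simp
  then have "bar k = b" using based_one[OF bar_I[OF kI] assms(2)] by simp
  then have "k = bar b" using bar_bar[OF kI] by metis
  then show ?thesis using k(1) by (simp add: supp3_def)
qed

lemma recA:
  assumes "a \<in> I" "b \<in> I" "c \<in> I" "NR a b c \<noteq> 0"
  shows "NR c (bar b) a \<noteq> 0"
proof -
  have 1: "NR (bar c) a (bar b) \<noteq> 0" using L1 assms by blast
  have 2: "NR (bar (bar b)) (bar c) (bar a) \<noteq> 0" using L1[OF bar_I[OF assms(3)] assms(1) bar_I[OF assms(2)] 1] .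
  have "NR b (bar c) (bar a) \<noteq> 0" using 2 bar_bar[OF assms(2)] by simp
  moreover have "NR b (bar c) (bar a) = NR c (bar b) a"
    using conj[OF assms(2) bar_I[OF assms(3)] bar_I[OF assms(1)]] bar_bar assms by simp
  ultimately show ?thesis by simp
qed

lemma nonempty:
  assumes "a \<in> I" "b \<in> I"
  shows "\<exists>k\<in>I. NR k b a \<noteq> 0"
proof -
  have eq: "(\<Sum>k\<in>supp3 NR a (bar b). NR a (bar b) k * NR k b a) = (\<Sum>k\<in>supp3 NR (bar b) b. NR (bar b) b k * NR a k a)"
    using assocR[OF assms(1) bar_I[OF assms(2)] assms(2)] .
  have "one \<in> supp3 NR (bar b) b" using based_one[OF assms(2) assms(2)] by (simp add: supp3_def)
  moreover have "NR (bar b) b one * NR a one a \<noteq> 0" using based_one[OF assms(2) assms(2)] one_right[OF assms(1)] by simp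
  ultimately have "(\<Sum>k\<in>supp3 NR (bar b) b. NR (bar b) b k * NR a k a) \<noteq> 0"
    using supp_fin[OF bar_I[OF assms(2)] assms(2)] by (simp add: sum_eq_0_iff) blast
  then obtain k where k: "k \<in> supp3 NR a (bar b)" "NR k b a \<noteq> 0"
    using eq by (metis (no_types, lifting) mult_0_right sum.neutral)
  have "k \<in> I" using k(1) supp_I[OF assms(1) bar_I[OF assms(2)]] by blast
  then show ?thesis using k(2) by blast
qed

definition om where "om i = fst (phi (bar i))"
definition la where "la i = bar (snd (phi (bar i)))"

lemma phi_in: "i \<in> I \<Longrightarrow> phi i \<in> Om \<times> L"
  using bij by (auto simp: bij_betw_def)

lemma om_la_in: "i \<in> I \<Longrightarrow> om i \<in> Om \<and> la i \<in> L"
  using phi_in[OF bar_I] bar_L by (auto simp: om_def la_def mem_Times_iff)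

lemma om_la_inj:
  assumes "i1 \<in> I" "i2 \<in> I" "om i1 = om i2" "la i1 = la i2"
  shows "i1 = i2"
proof -
  have "snd (phi (bar i1)) \<in> L" "snd (phi (bar i2)) \<in> L"
    using phi_in[OF bar_I[OF assms(1)]] phi_in[OF bar_I[OF assms(2)]] by (auto simp: mem_Times_iff)
  then have "snd (phi (bar i1)) = snd (phi (bar i2))"
    using assms(4) unfolding la_def by (metis bar_bar L_sub subsetD)
  then have "phi (bar i1) = phi (bar i2)" using assms(3) unfolding om_def by (simp add: prod_eq_iff)
  then have "bar i1 = bar i2" using bij bar_I assms(1,2) by (auto simp: bij_betw_def inj_on_def)
  then show ?thesis by (metis bar_bar assms(1,2))
qed

lemma om_la_surj:
  assumes "w \<in> Om" "l \<in> L"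
  shows "\<exists>i\<in>I. om i = w \<and> la i = l"
proof -
  have "(w, bar l) \<in> Om \<times> L" using assms bar_L by simp
  then obtain x where x: "x \<in> I" "phi x = (w, bar l)" using bij by (metis bij_betw_iff_bijections)
  have "bar (bar x) = x" using bar_bar x(1) .
  then have "om (bar x) = w" "la (bar x) = l"
    using x bar_bar assms(2) L_sub by (auto simp: om_def la_def)
  then show ?thesis using bar_I[OF x(1)] by blast
qed

definition pick where "pick w l = (SOME i. i \<in> I \<and> om i = w \<and> la i = l)"

lemma pick: "w \<in> Om \<Longrightarrow> l \<in> L \<Longrightarrow> pick w l \<in> I \<and> om (pick w l) = w \<and> la (pick w l) = l"
  unfolding pick_def by (rule someI_ex) (use om_la_surj in blast)

lemma pick_eq: "i \<in> I \<Longrightarrow> om i = w \<Longrightarrow> la i = l \<Longrightarrow> pick w l = i"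
  using pick[of w l] om_la_in om_la_inj by metis

definition u where "u i = pick (om i) one"

lemma u: "i \<in> I \<Longrightarrow> u i \<in> I \<and> om (u i) = om i \<and> la (u i) = one"
  unfolding u_def using pick om_la_in one_L by blast

lemma right_act:
  assumes "r \<in> I" "s \<in> L" "i \<in> I"
  shows "NR r s i = (if om i = om r then NR (la r) s (la i) else 0)"
proof -
  have sI: "s \<in> I" using assms(2) L_sub by blast
  have xL: "snd (phi (bar r)) \<in> L" "snd (phi (bar i)) \<in> L"
    using phi_in[OF bar_I[OF assms(1)]] phi_in[OF bar_I[OF assms(3)]] by (auto simp: mem_Times_iff)
  have "NR r s i = NR (bar s) (bar r) (bar i)" using conj assms(1,3) sI by blast
  also have "\<dots> = (if fst (phi (bar i)) = fst (phi (bar r)) then NR (bar s) (snd (phi (bar r))) (snd (phi (bar i))) else 0)"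
    using act bar_L[OF assms(2)] bar_I assms(1,3) by blast
  also have "NR (bar s) (snd (phi (bar r))) (snd (phi (bar i))) = NR (la r) s (la i)"
  proof -
    have "NR (bar s) (snd (phi (bar r))) (snd (phi (bar i))) = NR (bar (snd (phi (bar r)))) (bar (bar s)) (bar (snd (phi (bar i))))"
      using conj xL L_sub bar_L[OF assms(2)] by blast
    then show ?thesis using bar_bar sI by (simp add: la_def)
  qed
  finally show ?thesis by (simp add: om_def)
qed

definition t :: "'i \<times> 'j \<Rightarrow> 'i \<times> 'j \<Rightarrow> int" where
  "t p y = (if fst p \<in> I \<and> snd p \<in> J \<and> fst y = u (fst p) then int (NM (la (fst p)) (snd p) (snd y)) else 0)"

definition T :: "('i \<times> 'j \<Rightarrow> int) \<Rightarrow> 'i \<times> 'j \<Rightarrow> int" where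
  "T f y = (\<Sum>p\<in>{p. f p \<noteq> 0}. f p * t p y)"

definition Bs where "Bs = {p. fst p \<in> I \<and> la (fst p) = one \<and> snd p \<in> J}"

lemma T_eq: "finite P \<Longrightarrow> {p. f p \<noteq> 0} \<subseteq> P \<Longrightarrow> T f y = (\<Sum>p\<in>P. f p * t p y)"
  unfolding T_def by (rule sum.mono_neutral_left) auto

lemma T_diff:
  assumes "finite {p. f p \<noteq> 0}" "finite {p. g p \<noteq> 0}"
  shows "T (\<lambda>x. f x - g x) y = T f y - T g y"
proof -
  let ?P = "{p. f p \<noteq> 0} \<union> {p. g p \<noteq> 0}"
  have fP: "finite ?P" using assms by simp
  have "T (\<lambda>x. f x - g x) y = (\<Sum>p\<in>?P. (f p - g p) * t p y)" by (rule T_eq[OF fP]) auto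
  also have "\<dots> = (\<Sum>p\<in>?P. f p * t p y) - (\<Sum>p\<in>?P. g p * t p y)"
    by (simp add: left_diff_distrib sum_subtractf)
  also have "\<dots> = T f y - T g y" using T_eq[OF fP, of f y] T_eq[OF fP, of g y] by auto
  finally show ?thesis .
qed

lemma T_comb:
  assumes "finite F" "\<forall>g\<in>F. finite {p. g p \<noteq> 0}"
  shows "T (\<lambda>x. \<Sum>g\<in>F. c g * g x) y = (\<Sum>g\<in>F. c g * T g y)"
proof -
  let ?P = "\<Union>g\<in>F. {p. g p \<noteq> 0}"
  have fP: "finite ?P" using assms by blast
  have "T (\<lambda>x. \<Sum>g\<in>F. c g * g x) y = (\<Sum>p\<in>?P. (\<Sum>g\<in>F. c g * g p) * t p y)"
  proof (rule T_eq[OF fP])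
    show "{p. (\<Sum>g\<in>F. c g * g p) \<noteq> 0} \<subseteq> ?P"
    proof
      fix p assume "p \<in> {p. (\<Sum>g\<in>F. c g * g p) \<noteq> 0}"
      then have "(\<Sum>g\<in>F. c g * g p) \<noteq> 0" by simp
      then obtain g where "g \<in> F" "c g * g p \<noteq> 0" by (meson sum.neutral)
      then show "p \<in> ?P" by auto
    qed
  qed
  also have "\<dots> = (\<Sum>p\<in>?P. \<Sum>g\<in>F. c g * (g p * t p y))"
    by (simp add: sum_distrib_right mult.assoc)
  also have "\<dots> = (\<Sum>g\<in>F. \<Sum>p\<in>?P. c g * (g p * t p y))" by (rule sum.swap)
  also have "\<dots> = (\<Sum>g\<in>F. c g * T g y)"
  proof (rule sum.cong[OF refl])
    fix g assume "g \<in> F"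
    then have "T g y = (\<Sum>p\<in>?P. g p * t p y)" by (intro T_eq[OF fP]) auto
    then show "(\<Sum>p\<in>?P. c g * (g p * t p y)) = c g * T g y" by (simp add: sum_distrib_left)
  qed
  finally show ?thesis .
qed

lemma t_B: "p \<in> Bs \<Longrightarrow> t p y = (if y = p then 1 else 0)"
proof -
  assume p: "p \<in> Bs"
  obtain i j' where pe: "p = (i, j')" by fastforce
  have i: "i \<in> I" "la i = one" "j' \<in> J" using p pe by (auto simp: Bs_def)
  have "u i = i" unfolding u_def using pick_eq i by simp
  then show ?thesis using i pe NM_one[OF i(3)] by (cases y) (auto simp: t_def)
qed

lemma T_B:
  assumes "finsupp_on Bs c"
  shows "T c y = c y"
proof -
  have fin: "finite {p. c p \<noteq> 0}" and sub: "{p. c p \<noteq> 0} \<subseteq> Bs" using assms by (auto simp: finsupp_on_def)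
  have "T c y = (\<Sum>p\<in>{p. c p \<noteq> 0}. c p * (if y = p then 1 else 0))"
    unfolding T_def
  proof (rule sum.cong[OF refl])
    fix p assume "p \<in> {p. c p \<noteq> 0}"
    then have "p \<in> Bs" using sub by blast
    then show "c p * t p y = c p * (if y = p then 1 else 0)" by (simp add: t_B)
  qed
  also have "\<dots> = (\<Sum>p\<in>{p. c p \<noteq> 0}. if y = p then c p else 0)"
    by (rule sum.cong) auto
  also have "\<dots> = c y" using fin by (simp add: sum.delta)
  finally show ?thesis .
qed

lemma T_supp:
  assumes "finsupp_on (I \<times> J) f"
  shows "finsupp_on Bs (T f)"
proof -
  have fin: "finite {p. f p \<noteq> 0}" and sub: "{p. f p \<noteq> 0} \<subseteq> I \<times> J" using assms by (auto simp: finsupp_on_def)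
  let ?U = "\<Union>p\<in>{p. f p \<noteq> 0}. {u (fst p)} \<times> supp3 NM (la (fst p)) (snd p)"
  have key: "y \<in> ?U \<and> y \<in> Bs" if "T f y \<noteq> 0" for y
  proof -
    have "(\<Sum>p\<in>{p. f p \<noteq> 0}. f p * t p y) \<noteq> 0" using \<open>T f y \<noteq> 0\<close> unfolding T_def .
    then obtain p where p0: "p \<in> {p. f p \<noteq> 0}" and p2: "f p * t p y \<noteq> 0" by (rule sum.not_neutral_contains_not_neutral)
    then have p: "f p \<noteq> 0" "f p * t p y \<noteq> 0" by auto
    have pIJ: "fst p \<in> I" "snd p \<in> J" using p(1) sub by auto
    have tn: "t p y \<noteq> 0" using p(2) by simp
    then have y1: "fst y = u (fst p)" and y2: "NM (la (fst p)) (snd p) (snd y) \<noteq> 0"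
      by (auto simp: t_def split: if_splits)
    have laL: "la (fst p) \<in> L" using om_la_in pIJ by blast
    have "snd y \<in> J" using NM_J[OF laL pIJ(2) y2] .
    moreover have "u (fst p) \<in> I" "la (u (fst p)) = one" using u pIJ by auto
    ultimately have "y \<in> Bs" using y1 by (simp add: Bs_def)
    moreover have "y \<in> ?U" using p(1) y1 y2 by (intro UN_I[of p]) (auto simp: supp3_def mem_Times_iff)
    ultimately show ?thesis by blast
  qed
  have "finite ?U" using fin
  proof (intro finite_UN_I)
    fix p assume "p \<in> {p. f p \<noteq> 0}"
    then have "fst p \<in> I" "snd p \<in> J" using sub by auto
    then show "finite ({u (fst p)} \<times> supp3 NM (la (fst p)) (snd p))" using NM_fin om_la_in by blast
  qed
  moreover have "{y. T f y \<noteq> 0} \<subseteq> ?U" using key by blast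
  ultimately have "finite {y. T f y \<noteq> 0}" by (rule finite_subset[rotated])
  moreover have "{y. T f y \<noteq> 0} \<subseteq> Bs" using key by blast
  ultimately show ?thesis unfolding finsupp_on_def by blast
qed

lemma u_om: "i \<in> I \<Longrightarrow> r \<in> I \<Longrightarrow> om i = om r \<Longrightarrow> u i = u r"
  by (simp add: u_def)

lemma T_rel:
  assumes r: "r \<in> I" and s: "s \<in> L" and n: "n \<in> J"
  shows "T (tens_rel NR NM r s n) y = 0"
proof -
  have sI: "s \<in> I" using s L_sub by blast
  define fA where "fA x = (if snd x = n then int (NR r s (fst x)) else 0)" for x :: "'i \<times> 'j"
  define fB where "fB x = (if fst x = r then int (NM s n (snd x)) else 0)" for x :: "'i \<times> 'j"
  define S1 where "S1 = supp3 NR r s"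
  define S2 where "S2 = supp3 NM s n"
  have fS1: "finite S1" using supp_fin[OF r sI] by (simp add: S1_def)
  have fS2: "finite S2" using NM_fin[OF s n] by (simp add: S2_def)
  have S1I: "S1 \<subseteq> I" using supp_I[OF r sI] by (simp add: S1_def)
  have tr: "tens_rel NR NM r s n = (\<lambda>x. fA x - fB x)"
    by (rule ext) (auto simp: tens_rel_def fA_def fB_def split: prod.splits)
  have suppA: "{p. fA p \<noteq> 0} \<subseteq> (\<lambda>i. (i, n)) ` S1"
    by (auto simp: fA_def S1_def supp3_def split: if_splits)
  have suppB: "{p. fB p \<noteq> 0} \<subseteq> (\<lambda>j. (r, j)) ` S2"
    by (auto simp: fB_def S2_def supp3_def split: if_splits)
  have finA: "finite {p. fA p \<noteq> 0}" using suppA fS1 finite_subset by blast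
  have finB: "finite {p. fB p \<noteq> 0}" using suppB fS2 finite_subset by blast
  have TA: "T fA y = (\<Sum>i\<in>S1. int (NR r s i) * t (i, n) y)"
  proof -
    have "T fA y = (\<Sum>p\<in>(\<lambda>i. (i, n)) ` S1. fA p * t p y)" using T_eq fS1 suppA by blast
    also have "\<dots> = (\<Sum>i\<in>S1. fA (i, n) * t (i, n) y)" by (subst sum.reindex) (auto simp: inj_on_def)
    finally show ?thesis by (simp add: fA_def)
  qed
  have TB: "T fB y = (\<Sum>j'\<in>S2. int (NM s n j') * t (r, j') y)"
  proof -
    have "T fB y = (\<Sum>p\<in>(\<lambda>j. (r, j)) ` S2. fB p * t p y)" using T_eq fS2 suppB by blast
    also have "\<dots> = (\<Sum>j\<in>S2. fB (r, j) * t (r, j) y)" by (subst sum.reindex) (auto simp: inj_on_def)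
    finally show ?thesis by (simp add: fB_def)
  qed
  have omS1: "om i = om r" if "i \<in> S1" for i
  proof -
    have "i \<in> I" using that S1I by blast
    moreover have "NR r s i \<noteq> 0" using that by (simp add: S1_def supp3_def)
    ultimately show ?thesis using right_act[OF r s] by (auto split: if_splits)
  qed
  obtain b j where y: "y = (b, j)" by fastforce
  show ?thesis
  proof (cases "b = u r")
    case False
    have "T fA y = 0" unfolding TA
    proof (rule sum.neutral, rule ballI)
      fix i assume i: "i \<in> S1"
      then have iI: "i \<in> I" using S1I by blast
      have "u i = u r" using u_om[OF iI r omS1[OF i]] .
      then show "int (NR r s i) * t (i, n) y = 0" using False by (simp add: t_def y)
    qed
    moreover have "T fB y = 0" unfolding TB
      by (rule sum.neutral) (use False in \<open>auto simp: t_def y\<close>)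
    ultimately show ?thesis using tr T_diff[OF finA finB] by simp
  next
    case True
    have laL: "la r \<in> L" using om_la_in r by blast
    have "T fA y = (\<Sum>i\<in>S1. int (NR (la r) s (la i) * NM (la i) n j))" unfolding TA
    proof (rule sum.cong[OF refl])
      fix i assume i: "i \<in> S1"
      then have iI: "i \<in> I" using S1I by blast
      have "u i = u r" using u_om[OF iI r omS1[OF i]] .
      then show "int (NR r s i) * t (i, n) y = int (NR (la r) s (la i) * NM (la i) n j)"
        using True iI n right_act[OF r s iI] omS1[OF i] by (simp add: t_def y)
    qed
    also have "\<dots> = (\<Sum>k\<in>la ` S1. int (NR (la r) s k * NM k n j))"
    proof (rule sum.reindex[symmetric, unfolded comp_def])
      show "inj_on la S1"
        by (rule inj_onI) (metis S1I omS1 om_la_inj subsetD)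
    qed
    also have "la ` S1 = supp3 NR (la r) s"
    proof
      show "la ` S1 \<subseteq> supp3 NR (la r) s"
      proof
        fix k assume "k \<in> la ` S1"
        then obtain i where i: "i \<in> S1" "k = la i" by blast
        have iI: "i \<in> I" using i S1I by blast
        have "NR r s i \<noteq> 0" using i by (simp add: S1_def supp3_def)
        then show "k \<in> supp3 NR (la r) s" using right_act[OF r s iI] i omS1 by (simp add: supp3_def)
      qed
    next
      show "supp3 NR (la r) s \<subseteq> la ` S1"
      proof
        fix k assume k: "k \<in> supp3 NR (la r) s"
        have kL: "k \<in> L" using k supp_L[OF laL s] by blast
        have omr: "om r \<in> Om" using om_la_in r by blast
        define i where "i = pick (om r) k"
        have i: "i \<in> I" "om i = om r" "la i = k" using pick[OF omr kL] by (auto simp: i_def)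
        have "NR r s i \<noteq> 0" using right_act[OF r s i(1)] i k by (simp add: supp3_def)
        then have "i \<in> S1" by (simp add: S1_def supp3_def)
        then show "k \<in> la ` S1" using i(3) by blast
      qed
    qed
    finally have A: "T fA y = int (\<Sum>k\<in>supp3 NR (la r) s. NR (la r) s k * NM k n j)" by simp
    have "T fB y = (\<Sum>j'\<in>S2. int (NM s n j' * NM (la r) j' j))" unfolding TB
    proof (rule sum.cong[OF refl])
      fix j' assume "j' \<in> S2"
      then have "j' \<in> J" using NM_J[OF s n] by (auto simp: S2_def supp3_def)
      then show "int (NM s n j') * t (r, j') y = int (NM s n j' * NM (la r) j' j)"
        using True r by (simp add: t_def y)
    qed
    then have B: "T fB y = int (\<Sum>j'\<in>supp3 NM s n. NM s n j' * NM (la r) j' j)" by (simp add: S2_def)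
    show ?thesis using tr T_diff[OF finA finB] A B NM_assoc[OF laL s n] by simp
  qed
qed

lemma tr_fin:
  assumes r: "r \<in> I" and s: "s \<in> L" and n: "n \<in> J"
  shows "finite {p. tens_rel NR NM r s n p \<noteq> 0}"
proof -
  have sI: "s \<in> I" using s L_sub by blast
  have "{p. tens_rel NR NM r s n p \<noteq> 0} \<subseteq> (supp3 NR r s \<times> {n}) \<union> ({r} \<times> supp3 NM s n)"
    by (auto simp: tens_rel_def supp3_def split: if_splits)
  moreover have "finite ((supp3 NR r s \<times> {n}) \<union> ({r} \<times> supp3 NM s n))"
    using supp_fin[OF r sI] NM_fin[OF s n] by simp
  ultimately show ?thesis using finite_subset by blast
qed

lemma T_K:
  assumes "g \<in> ind_rels I L J NR NM"
  shows "T g y = 0"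
proof -
  obtain F c where F: "finite F" "F \<subseteq> {tens_rel NR NM r s n | r s n. r \<in> I \<and> s \<in> L \<and> n \<in> J}"
    and g: "g = (\<lambda>x. \<Sum>h\<in>F. c h * h x)"
    using assms unfolding ind_rels_def zspan_def by blast
  have fin: "\<forall>h\<in>F. finite {p. h p \<noteq> 0}" using F(2) tr_fin by blast
  have "T g y = (\<Sum>h\<in>F. c h * T h y)" unfolding g by (rule T_comb[OF F(1) fin])
  also have "\<dots> = 0"
  proof (rule sum.neutral, rule ballI)
    fix h assume "h \<in> F"
    then obtain r s n where "h = tens_rel NR NM r s n" "r \<in> I" "s \<in> L" "n \<in> J" using F(2) by blast
    then show "c h * T h y = 0" using T_rel by simp
  qed
  finally show ?thesis .
qed

lemma delta_t:
  assumes i: "i \<in> I" and j': "j' \<in> J"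
  shows "(\<lambda>x. delta (i, j') x - t (i, j') x) = tens_rel NR NM (u i) (la i) j'"
proof (rule ext)
  fix x :: "'i \<times> 'j"
  obtain x1 x2 where x: "x = (x1, x2)" by fastforce
  have ui: "u i \<in> I" "om (u i) = om i" "la (u i) = one" using u[OF i] by auto
  have laL: "la i \<in> L" using om_la_in[OF i] by blast
  have laI: "la i \<in> I" using laL L_sub by blast
  have NR1: "NR (u i) (la i) x1 = (if x1 = i then 1 else 0)"
  proof (cases "x1 \<in> I")
    case True
    have "NR (u i) (la i) x1 = (if om x1 = om i then NR one (la i) (la x1) else 0)"
      using right_act[OF ui(1) laL True] ui by simp
    also have "\<dots> = (if x1 = i then 1 else 0)"
      using one_left[OF laI] om_la_inj[OF True i] by auto
    finally show ?thesis .
  next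
    case False
    then have "NR (u i) (la i) x1 = 0" using NR_I[OF ui(1) laI] by blast
    then show ?thesis using False i by auto
  qed
  show "delta (i, j') x - t (i, j') x = tens_rel NR NM (u i) (la i) j' x"
    using NR1 i j' by (auto simp: x delta_def t_def tens_rel_def)
qed

lemma exist_K:
  assumes f: "finsupp_on (I \<times> J) f"
  shows "(\<lambda>x. f x - T f x) \<in> ind_rels I L J NR NM"
proof -
  define P where "P = {p. f p \<noteq> 0}"
  have fP: "finite P" and PIJ: "P \<subseteq> I \<times> J" using f by (auto simp: finsupp_on_def P_def)
  have eq: "(\<lambda>x. f x - T f x) = (\<lambda>x. \<Sum>p\<in>P. f p * (\<lambda>x. delta p x - t p x) x)"
  proof (rule ext)
    fix x
    have "(\<Sum>p\<in>P. f p * (delta p x - t p x)) = (\<Sum>p\<in>P. f p * delta p x) - (\<Sum>p\<in>P. f p * t p x)"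
      by (simp add: right_diff_distrib sum_subtractf)
    also have "(\<Sum>p\<in>P. f p * delta p x) = (\<Sum>p\<in>P. if x = p then f p else 0)"
      by (rule sum.cong) (auto simp: delta_def)
    also have "\<dots> = f x" using fP by (simp add: sum.delta P_def)
    also have "(\<Sum>p\<in>P. f p * t p x) = T f x" by (simp add: T_def P_def)
    finally show "f x - T f x = (\<Sum>p\<in>P. f p * (\<lambda>x. delta p x - t p x) x)" by simp
  qed
  show ?thesis unfolding eq ind_rels_def
  proof (rule sum_in_zspan[OF fP], rule ballI)
    fix p assume "p \<in> P"
    then obtain i j' where p: "p = (i, j')" "i \<in> I" "j' \<in> J" using PIJ by blast
    have "u i \<in> I" "la i \<in> L" using u om_la_in p by auto
    then show "(\<lambda>x. delta p x - t p x) \<in> {tens_rel NR NM r s n | r s n. r \<in> I \<and> s \<in> L \<and> n \<in> J}"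
      using delta_t[OF p(2,3)] p by blast
  qed
qed

lemma Bs_sub: "Bs \<subseteq> I \<times> J" by (auto simp: Bs_def)

lemma uniq:
  assumes f: "finsupp_on (I \<times> J) f" and c: "finsupp_on Bs c"
    and K: "(\<lambda>x. f x - c x) \<in> ind_rels I L J NR NM"
  shows "c = T f"
proof (rule ext)
  fix y
  have "finite {p. f p \<noteq> 0}" "finite {p. c p \<noteq> 0}" using f c by (auto simp: finsupp_on_def)
  then have "T (\<lambda>x. f x - c x) y = T f y - T c y" by (rule T_diff)
  then show "c y = T f y" using T_K[OF K] T_B[OF c] by simp
qed

lemma basis: "ind_basis I J (ind_rels I L J NR NM) Bs"
  unfolding ind_basis_def
proof (intro conjI Bs_sub allI impI)
  fix f assume f: "finsupp_on (I \<times> J) f"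
  show "\<exists>!c. finsupp_on Bs c \<and> (\<lambda>x. f x - c x) \<in> ind_rels I L J NR NM"
    using T_supp[OF f] exist_K[OF f] uniq[OF f] by blast
qed

lemma coeff:
  assumes f: "finsupp_on (I \<times> J) f"
  shows "ind_coeff (ind_rels I L J NR NM) Bs f = T f"
  unfolding ind_coeff_def
  by (rule the1_equality) (use T_supp[OF f] exist_K[OF f] uniq[OF f] in blast)+

lemma act_delta:
  "ind_action NR \<alpha> (delta (r', j')) = (\<lambda>x. if snd x = j' then int (NR \<alpha> r' (fst x)) else 0)"
proof -
  have "{i'. \<exists>j''. delta (r', j') (i', j'') \<noteq> 0} = {r'}" by (auto simp: delta_def)
  then show ?thesis by (auto simp: ind_action_def delta_def fun_eq_iff)
qed

definition val where
  "val \<alpha> r' j' r j = (\<Sum>i\<in>supp3 NR \<alpha> r'. NR \<alpha> r' i * (if r = u i then NM (la i) j' j else 0))"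

lemma const_val:
  assumes a: "\<alpha> \<in> I" and b': "(r', j') \<in> Bs"
  shows "ind_const I L J NR NM Bs \<alpha> (r', j') (r, j) = int (val \<alpha> r' j' r j)"
proof -
  have r': "r' \<in> I" and j': "j' \<in> J" using b' by (auto simp: Bs_def)
  define g where "g = (\<lambda>x::'i \<times> 'j. if snd x = j' then int (NR \<alpha> r' (fst x)) else 0)"
  define S where "S = supp3 NR \<alpha> r'"
  have fS: "finite S" and SI: "S \<subseteq> I" using supp_fin[OF a r'] supp_I[OF a r'] by (auto simp: S_def)
  have gsupp: "{p. g p \<noteq> 0} \<subseteq> (\<lambda>i. (i, j')) ` S"
    by (auto simp: g_def S_def supp3_def split: if_splits)
  have fin: "finite {p. g p \<noteq> 0}" using gsupp fS finite_subset by blast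
  have "(\<lambda>i. (i, j')) ` S \<subseteq> I \<times> J" using SI j' by auto
  then have gf: "finsupp_on (I \<times> J) g" using fin gsupp by (auto simp: finsupp_on_def)
  have "ind_const I L J NR NM Bs \<alpha> (r', j') (r, j) = T g (r, j)"
    unfolding ind_const_def act_delta g_def[symmetric] coeff[OF gf] ..
  also have "\<dots> = (\<Sum>p\<in>(\<lambda>i. (i, j')) ` S. g p * t p (r, j))" using T_eq fS gsupp by blast
  also have "\<dots> = (\<Sum>i\<in>S. g (i, j') * t (i, j') (r, j))" by (subst sum.reindex) (auto simp: inj_on_def)
  also have "\<dots> = (\<Sum>i\<in>S. int (NR \<alpha> r' i * (if r = u i then NM (la i) j' j else 0)))"
  proof (rule sum.cong[OF refl])
    fix i assume "i \<in> S"
    then have "i \<in> I" using SI by blast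
    then show "g (i, j') * t (i, j') (r, j) = int (NR \<alpha> r' i * (if r = u i then NM (la i) j' j else 0))"
      using j' by (simp add: g_def t_def)
  qed
  also have "\<dots> = int (val \<alpha> r' j' r j)" by (simp add: val_def S_def)
  finally show ?thesis .
qed

lemma val_nz:
  assumes a: "\<alpha> \<in> I" and r': "r' \<in> I"
  shows "val \<alpha> r' j' r j \<noteq> 0 \<longleftrightarrow> (\<exists>i. NR \<alpha> r' i \<noteq> 0 \<and> r = u i \<and> NM (la i) j' j \<noteq> 0)"
  unfolding val_def using supp_fin[OF a r'] by (auto simp: supp3_def)

lemma main:
  assumes tors: "torsion_module L J NM"
  shows "\<exists>B. ind_basis I J (ind_rels I L J NR NM) B
           \<and> (\<forall>\<alpha>\<in>I. \<forall>b'\<in>B. \<forall>b\<in>B. ind_const I L J NR NM B \<alpha> b' b \<ge> 0)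
           \<and> (\<forall>b\<in>B. \<forall>b'\<in>B. finite {\<alpha>\<in>I. ind_const I L J NR NM B \<alpha> b' b \<noteq> 0})
           \<and> (\<forall>b\<in>B. \<forall>b'\<in>B. \<exists>\<alpha>\<in>I. ind_const I L J NR NM B \<alpha> b' b \<noteq> 0)"
proof (intro exI[of _ Bs] conjI basis ballI)
  fix \<alpha> b' b assume a: "\<alpha> \<in> I" and b': "b' \<in> Bs" and b: "b \<in> Bs"
  obtain r' j' where "b' = (r', j')" by fastforce
  moreover obtain r j where "b = (r, j)" by fastforce
  ultimately show "ind_const I L J NR NM Bs \<alpha> b' b \<ge> 0" using const_val[OF a] b' by simp
next
  fix b b' assume b: "b \<in> Bs" and b': "b' \<in> Bs"
  obtain r' j' where bb': "b' = (r', j')" by fastforce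
  obtain r j where bb: "b = (r, j)" by fastforce
  have r': "r' \<in> I" "j' \<in> J" using b' bb' by (auto simp: Bs_def)
  have r: "r \<in> I" "j \<in> J" using b bb by (auto simp: Bs_def)
  define Phi where "Phi = {i\<in>I. u i = r \<and> NM (la i) j' j \<noteq> 0}"
  have "inj_on la Phi"
  proof (rule inj_onI)
    fix x y assume "x \<in> Phi" "y \<in> Phi" "la x = la y"
    then have "x \<in> I" "y \<in> I" "u x = u y" by (auto simp: Phi_def)
    then have "om x = om y" using u by metis
    then show "x = y" using om_la_inj \<open>x \<in> I\<close> \<open>y \<in> I\<close> \<open>la x = la y\<close> by blast
  qed
  moreover have "la ` Phi \<subseteq> {a\<in>L. NM a j' j \<noteq> 0}" using om_la_in by (auto simp: Phi_def)
  moreover have "finite {a\<in>L. NM a j' j \<noteq> 0}"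
    using tors r r' by (auto simp: torsion_module_def cofinite_module_def)
  ultimately have fPhi: "finite Phi" by (meson finite_imageD finite_subset)
  have "finite (\<Union>i\<in>Phi. supp3 NR i (bar r'))"
    using fPhi supp_fin bar_I[OF r'(1)] by (auto simp: Phi_def)
  moreover have "{\<alpha>\<in>I. ind_const I L J NR NM Bs \<alpha> b' b \<noteq> 0} \<subseteq> (\<Union>i\<in>Phi. supp3 NR i (bar r'))"
  proof
    fix \<alpha> assume "\<alpha> \<in> {\<alpha>\<in>I. ind_const I L J NR NM Bs \<alpha> b' b \<noteq> 0}"
    then have a: "\<alpha> \<in> I" and nz: "ind_const I L J NR NM Bs \<alpha> b' b \<noteq> 0" by auto
    have "val \<alpha> r' j' r j \<noteq> 0" using nz const_val[OF a] b' bb bb' by simp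
    then obtain i where i: "NR \<alpha> r' i \<noteq> 0" "r = u i" "NM (la i) j' j \<noteq> 0" using val_nz[OF a r'(1)] by blast
    have iI: "i \<in> I" using NR_I[OF a r'(1) i(1)] .
    have "NR i (bar r') \<alpha> \<noteq> 0" using recA[OF a r'(1) iI i(1)] .
    moreover have "i \<in> Phi" using iI i by (simp add: Phi_def)
    ultimately show "\<alpha> \<in> (\<Union>i\<in>Phi. supp3 NR i (bar r'))" by (auto simp: supp3_def)
  qed
  ultimately show "finite {\<alpha>\<in>I. ind_const I L J NR NM Bs \<alpha> b' b \<noteq> 0}" using finite_subset by blast
next
  fix b b' assume b: "b \<in> Bs" and b': "b' \<in> Bs"
  obtain r' j' where bb': "b' = (r', j')" by fastforce
  obtain r j where bb: "b = (r, j)" by fastforce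
  have r': "r' \<in> I" "j' \<in> J" using b' bb' by (auto simp: Bs_def)
  have r: "r \<in> I" "la r = one" "j \<in> J" using b bb by (auto simp: Bs_def)
  obtain l where l: "l \<in> L" "NM l j' j \<noteq> 0"
    using tors r r' by (auto simp: torsion_module_def connected_module_def)
  have omr: "om r \<in> Om" using om_la_in r(1) by blast
  define i where "i = pick (om r) l"
  have i: "i \<in> I" "om i = om r" "la i = l" using pick[OF omr l(1)] by (auto simp: i_def)
  have ui: "u i = r" unfolding u_def using i(2) pick_eq[OF r(1) refl r(2)] by simp
  obtain k where k: "k \<in> I" "NR k r' i \<noteq> 0" using nonempty[OF i(1) r'(1)] by blast
  have "val k r' j' r j \<noteq> 0" using val_nz[OF k(1) r'(1)] k(2) ui i(3) l(2) by blast
  then have "ind_const I L J NR NM Bs k b' b \<noteq> 0" using const_val[OF k(1)] b' bb bb' by simp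
  then show "\<exists>\<alpha>\<in>I. ind_const I L J NR NM Bs \<alpha> b' b \<noteq> 0" using k(1) by blast
qed

end

theorem lemma3p1:
  fixes I L :: "'i set" and one :: 'i and bar :: "'i \<Rightarrow> 'i"
    and NR :: "'i \<Rightarrow> 'i \<Rightarrow> 'i \<Rightarrow> nat"
    and J :: "'j set" and NM :: "'i \<Rightarrow> 'j \<Rightarrow> 'j \<Rightarrow> nat"
  assumes R: "based_ring I one bar NR"
    and S: "based_ring L one bar NR"
    and sub: "based_subring I one bar NR L"
    and N: "based_module L one bar NR J NM"
    and div: "divisible I L NR"
    and tors: "torsion_module L J NM"
  shows "\<exists>B. ind_basis I J (ind_rels I L J NR NM) B
           \<and> (\<forall>\<alpha>\<in>I. \<forall>b'\<in>B. \<forall>b\<in>B. ind_const I L J NR NM B \<alpha> b' b \<ge> 0)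
           \<and> (\<forall>b\<in>B. \<forall>b'\<in>B. finite {\<alpha>\<in>I. ind_const I L J NR NM B \<alpha> b' b \<noteq> 0})
           \<and> (\<forall>b\<in>B. \<forall>b'\<in>B. \<exists>\<alpha>\<in>I. ind_const I L J NR NM B \<alpha> b' b \<noteq> 0)"
proof -
  obtain Om :: "'i set" and phi :: "'i \<Rightarrow> 'i \<times> 'i" where bij: "bij_betw phi I (Om \<times> L)"
    and act: "\<forall>a\<in>L. \<forall>i\<in>I. \<forall>i'\<in>I.
           NR a i' i = (if fst (phi i) = fst (phi i') then NR a (snd (phi i')) (snd (phi i)) else 0)"
    using div unfolding divisible_def by blast
  interpret ctx I L one bar NR J NM Om phi
    using R S sub N bij act by (unfold_locales) auto
  show ?thesis using main[OF tors] .
qed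

end
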